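(* Consider the Hawkes point process with exponentially decaying intensity: points $0\le T_1\le T_2\le\cdots$ with counting process $N(t)=\sum_{i\ge1}\mathbf{1}_{\{0\le T_i<t\}}$ (so $N(0)=0$) and stochastic intensity $$\lambda(t)=\lambda(0)e^{-\beta t}+\sum_{i\ge1}Y_i e^{-\beta(t-T_i)}\mathbf{1}_{\{0\le T_i<t\}},$$ where $Y_i=\beta Z_i$ with $Z_1,Z_2,\dots$ i.i.d. nonnegative with distribution $G$, independent of the points. Fix $\beta>0$ and $G$ with $\rho_1=\int_0^\infty z\,dG(z)$ satisfying $0\le\rho_1<1$, and let $\alpha=\beta(1-\rho_1)$. For $\gamma\in(0,1)$ let $T_\gamma=\inf\{t>0:N(t)\ge\gamma N(+\infty)\}$. Let $n$ be a scaling parameter, take initial intensity $\lambda(0)=\alpha n$ and $\gamma=1-1/n$. Then, as $n\to\infty$, $$\mathbb{E}[T_{1-1/n}\mid\lambda(0)=\alpha n]\le\frac{1}{\alpha}\big(\log(n)+1+o(1)\big).$$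
   Context: $N(+\infty)=\lim_{t\to\infty}N(t)$ is the total number of points. Conditioning on $\lambda(0)=\alpha n$ means the process is started with initial intensity $\alpha n$ and no points. *)

theory Defs
  imports "HOL-Probability.Probability"
begin

text \<open>Hawkes process with exponential kernel, built pathwise by the random time change
  construction: given i.i.d. Exp(1) variables e 0, e 1, ... and marks z 0, z 1, ...,
  the (k+1)-th point is the first time after the k-th point at which the compensator
  (the integral of the intensity) has increased by e k.  If this never happens,
  the process has no further points.\<close>

text \<open>Intensity at time u, given the list ps of already constructed points
  (the i-th point, 0-indexed, carries jump size Y = beta * z i).\<close>
definition hawkes_lambda ::
  "real \<Rightarrow> real \<Rightarrow> (nat \<Rightarrow> real) \<Rightarrow> real list \<Rightarrow> real \<Rightarrow> real" where
  "hawkes_lambda \<beta> l0 z ps u =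
     l0 * exp (- \<beta> * u)
     + (\<Sum>i<length ps. if 0 \<le> ps ! i \<and> ps ! i < u
                        then \<beta> * z i * exp (- \<beta> * (u - ps ! i)) else 0)"

definition hawkes_next_set ::
  "real \<Rightarrow> real \<Rightarrow> (nat \<Rightarrow> real) \<Rightarrow> real list \<Rightarrow> real \<Rightarrow> real set" where
  "hawkes_next_set \<beta> l0 z ps x =
     (let a = (if ps = [] then 0 else last ps)
      in {t. a \<le> t \<and> x \<le> integral {a..t} (hawkes_lambda \<beta> l0 z ps)})"

fun hawkes_pts ::
  "real \<Rightarrow> real \<Rightarrow> (nat \<Rightarrow> real) \<Rightarrow> (nat \<Rightarrow> real) \<Rightarrow> nat \<Rightarrow> real list" where
  "hawkes_pts \<beta> l0 e z 0 = []"
| "hawkes_pts \<beta> l0 e z (Suc k) =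
     (let ps = hawkes_pts \<beta> l0 e z k; S = hawkes_next_set \<beta> l0 z ps (e k)
      in if length ps = k \<and> S \<noteq> {} then ps @ [Inf S] else ps)"

text \<open>T_(i+1) (0-indexed as i); \<infinity> if there is no (i+1)-th point.\<close>
definition hawkes_T ::
  "real \<Rightarrow> real \<Rightarrow> (nat \<Rightarrow> real) \<Rightarrow> (nat \<Rightarrow> real) \<Rightarrow> nat \<Rightarrow> ereal" where
  "hawkes_T \<beta> l0 e z i =
     (let ps = hawkes_pts \<beta> l0 e z (Suc i)
      in if length ps = Suc i then ereal (ps ! i) else \<infinity>)"

definition hawkes_N ::
  "real \<Rightarrow> real \<Rightarrow> (nat \<Rightarrow> real) \<Rightarrow> (nat \<Rightarrow> real) \<Rightarrow> real \<Rightarrow> nat" where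
  "hawkes_N \<beta> l0 e z t = card {i. 0 \<le> hawkes_T \<beta> l0 e z i \<and> hawkes_T \<beta> l0 e z i < ereal t}"

definition hawkes_Ninf ::
  "real \<Rightarrow> real \<Rightarrow> (nat \<Rightarrow> real) \<Rightarrow> (nat \<Rightarrow> real) \<Rightarrow> nat" where
  "hawkes_Ninf \<beta> l0 e z = card {i. 0 \<le> hawkes_T \<beta> l0 e z i \<and> hawkes_T \<beta> l0 e z i < \<infinity>}"

text \<open>T_gamma = inf {t > 0. N(t) \<ge> gamma N(+\<infinity>)}, valued in [0,\<infinity>] (inf of empty set = \<infinity>).\<close>
definition hawkes_Tgamma ::
  "real \<Rightarrow> real \<Rightarrow> real \<Rightarrow> (nat \<Rightarrow> real) \<Rightarrow> (nat \<Rightarrow> real) \<Rightarrow> ennreal" where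
  "hawkes_Tgamma \<beta> l0 \<gamma> e z =
     Inf {ennreal t | t. 0 < t \<and>
            real (hawkes_N \<beta> l0 e z t) \<ge> \<gamma> * real (hawkes_Ninf \<beta> l0 e z)}"

end

theory Submission
  imports Defs
begin

definition psi :: "real \<Rightarrow> real" where "psi s = (if s \<le> 1 then s else ln s + 1)"
definition dpsi :: "real \<Rightarrow> real" where "dpsi s = (if s \<le> 1 then 1 else 1 / s)"

lemma psi_measurable[measurable]: "psi \<in> borel_measurable borel"
  unfolding psi_def by measurable

lemma dpsi_measurable[measurable]: "dpsi \<in> borel_measurable borel"
  unfolding dpsi_def by measurable

lemma psi_nonneg: "0 \<le> s \<Longrightarrow> 0 \<le> psi s"
  unfolding psi_def by auto

lemma dpsi_pos: "0 < dpsi s"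
  unfolding dpsi_def by auto

lemma psi_deriv: "(psi has_real_derivative dpsi s) (at s)"
proof -
  consider "s < 1" | "s > 1" | "s = 1" by linarith
  then show ?thesis
  proof cases
    case 1
    have ev: "eventually (\<lambda>x. x = psi x) (nhds s)"
      using eventually_nhds_in_open[of "{..<1}" s] 1
      by (auto elim!: eventually_mono simp: psi_def)
    have "((\<lambda>x. x) has_real_derivative dpsi s) (at s)" using 1 by (simp add: dpsi_def DERIV_ident)
    then show ?thesis using DERIV_cong_ev[OF refl ev refl] by blast
  next
    case 2
    have ev: "eventually (\<lambda>x. ln x + 1 = psi x) (nhds s)"
      using eventually_nhds_in_open[of "{1<..}" s] 2
      by (auto elim!: eventually_mono simp: psi_def)
    have "((\<lambda>x. ln x + 1) has_real_derivative dpsi s) (at s)"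
      using 2 by (auto intro!: derivative_eq_intros simp: dpsi_def)
    then show ?thesis using DERIV_cong_ev[OF refl ev refl] by blast
  next
    case 3
    have L: "((\<lambda>y. (psi y - psi 1) / (y - 1)) \<longlongrightarrow> 1) (at_left 1)"
    proof (rule Lim_transform_eventually[OF tendsto_const])
      show "\<forall>\<^sub>F x in at_left 1. 1 = (psi x - psi 1) / (x - 1)"
        unfolding eventually_at_left_field
        by (rule exI[of _ 0]) (auto simp: psi_def)
    qed
    have "(ln has_real_derivative 1 / 1) (at 1)" using DERIV_ln[of 1] by simp
    then have "((\<lambda>y::real. (ln y - ln 1) / (y - 1)) \<longlongrightarrow> 1) (at 1)"
      unfolding has_field_derivative_iff by simp
    then have R0: "((\<lambda>y::real. (ln y - ln 1) / (y - 1)) \<longlongrightarrow> 1) (at_right 1)"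
      by (rule filterlim_mono) (auto simp: at_le)
    have R: "((\<lambda>y. (psi y - psi 1) / (y - 1)) \<longlongrightarrow> 1) (at_right 1)"
    proof (rule Lim_transform_eventually[OF R0])
      show "\<forall>\<^sub>F x in at_right 1. (ln x - ln 1) / (x - 1) = (psi x - psi 1) / (x - 1)"
        unfolding eventually_at_right_field
        by (rule exI[of _ 2]) (auto simp: psi_def)
    qed
    have "((\<lambda>y. (psi y - psi 1) / (y - 1)) \<longlongrightarrow> 1) (at 1)"
      using L R by (rule filterlim_split_at)
    then show ?thesis using 3 unfolding has_field_derivative_iff by (simp add: dpsi_def)
  qed
qed

lemma psi_tangent:
  assumes "0 \<le> s" "0 \<le> t"
  shows "psi (s + t) \<le> psi s + dpsi s * t"
proof (cases "s \<le> 1")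
  case True
  have "psi (s + t) \<le> s + t"
  proof (cases "s + t \<le> 1")
    case False
    then have "ln (s + t) \<le> s + t - 1" using ln_le_minus_one[of "s+t"] by auto
    then show ?thesis using False by (simp add: psi_def)
  qed (simp add: psi_def)
  then show ?thesis using True by (simp add: psi_def dpsi_def)
next
  case False
  then have st: "s + t > 1" "s > 0" using assms by auto
  have "ln (s + t) = ln s + ln (1 + t / s)"
  proof -
    have "1 + t / s = (s + t) / s" using st by (simp add: field_simps)
    then show ?thesis using st assms by (simp add: ln_div)
  qed
  also have "ln (1 + t / s) \<le> t / s" using assms st by (intro ln_add_one_self_le_self) auto
  finally show ?thesis using False st by (simp add: psi_def dpsi_def)
qed

lemma psi_mono: "s \<le> t \<Longrightarrow> psi s \<le> psi t"
proof -
  assume st: "s \<le> t"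
  show ?thesis
  proof (cases "t \<le> 1")
    case False
    then have lt: "ln t > 0" by simp
    show ?thesis
    proof (cases "s \<le> 1")
      case True
      then have "s \<le> ln t + 1" using lt by linarith
      then show ?thesis unfolding psi_def using True False by simp
    next
      case f2: False
      then show ?thesis unfolding psi_def using st False by simp
    qed
  qed (use st in \<open>auto simp: psi_def\<close>)
qed


lemma alg_aux:
  fixes \<rho> \<beta> \<alpha> c E L Q P D :: real
  assumes "\<beta> \<noteq> 0" "\<alpha> = \<beta> * (1 - \<rho>)" "c * (1 - \<rho>) = 1"
  shows "((1 - \<rho>) * (E * L + Q) + E * P + E * c * D) / \<alpha>
       = E * (L / \<beta> + (P + c * \<rho> * D) / \<alpha>) + ((1 - \<rho>) * Q + E * D) / \<alpha>"
proof -
  have r: "1 - \<rho> \<noteq> 0" using assms(3) by auto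
  have c: "c = 1 + c * \<rho>" using assms(3) by (simp add: algebra_simps)
  have "E * c * D = E * (c * \<rho> * D) + E * D" by (subst c) (simp add: algebra_simps)
  moreover have "E * L / \<beta> = (1 - \<rho>) * E * L / \<alpha>" using assms r by simp
  ultimately show ?thesis by (simp add: add_divide_distrib diff_divide_distrib algebra_simps)
qed

lemma AL_FTC:
  fixes \<rho> \<beta> y b :: real
  assumes r0: "0 \<le> \<rho>" and r1: "\<rho> < 1" and b0: "\<beta> > 0" and y0: "y > 0"
    and bb: "0 \<le> b" "b < y"
  defines "\<alpha> \<equiv> \<beta> * (1 - \<rho>)" and "c \<equiv> 1 / (1 - \<rho>)"
  defines "R \<equiv> (\<lambda>e. ((1 - \<rho>) * (exp (- y) - exp (- e)) * (ln y - ln (y - e))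
                      - exp (- e) * psi (c * (y - e))) / \<alpha>)"
  defines "h \<equiv> (\<lambda>e. ((1 - \<rho>) * (exp (- e) * (ln y - ln (y - e)) + (exp (- y) - exp (- e)) / (y - e))
                      + exp (- e) * psi (c * (y - e)) + exp (- e) * c * dpsi (c * (y - e))) / \<alpha>)"
  shows "(\<integral>\<^sup>+e\<in>{0..b}. ennreal (h e) \<partial>lborel) \<le> ennreal (psi (c * y) / \<alpha>)"
    and "\<And>e. 0 \<le> e \<Longrightarrow> e < y \<Longrightarrow>
           exp (- e) * (ln (y / (y - e)) / \<beta> + (psi (c * (y - e)) + c * \<rho> * dpsi (c * (y - e))) / \<alpha>) \<le> h e"
    and "\<And>e. 0 \<le> e \<Longrightarrow> e < y \<Longrightarrow>
           0 \<le> exp (- e) * (ln (y / (y - e)) / \<beta> + (psi (c * (y - e)) + c * \<rho> * dpsi (c * (y - e))) / \<alpha>)"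
proof -
  have al: "\<alpha> > 0" using b0 r1 by (simp add: \<alpha>_def)
  have c1: "c \<ge> 1" and cpos: "c > 0" using r0 r1 by (auto simp: c_def field_simps)
  have crho: "c * (1 - \<rho>) = 1" using r1 by (simp add: c_def)
  show f0: "0 \<le> exp (- e) * (ln (y / (y - e)) / \<beta> + (psi (c * (y - e)) + c * \<rho> * dpsi (c * (y - e))) / \<alpha>)"
    if "0 \<le> e" "e < y" for e
  proof -
    have "ln (y / (y - e)) \<ge> 0" using that y0 by (simp add: ln_ge_zero_iff field_simps)
    moreover have "psi (c * (y - e)) \<ge> 0" using that cpos by (intro psi_nonneg) simp
    moreover have "c * \<rho> * dpsi (c * (y - e)) \<ge> 0" using cpos r0 dpsi_pos[of "c * (y - e)"] by simp
    ultimately have A: "0 \<le> ln (y / (y - e)) / \<beta>" and B: "0 \<le> (psi (c * (y - e)) + c * \<rho> * dpsi (c * (y - e))) / \<alpha>"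
      using b0 al by auto
    show ?thesis by (rule mult_nonneg_nonneg) (use A B in simp_all)
  qed
  show fh: "exp (- e) * (ln (y / (y - e)) / \<beta> + (psi (c * (y - e)) + c * \<rho> * dpsi (c * (y - e))) / \<alpha>) \<le> h e"
    if e: "0 \<le> e" "e < y" for e
  proof -
    define w where "w = y - e"
    have w: "w > 0" using e by (simp add: w_def)
    have lnq: "ln (y / (y - e)) = ln y - ln (y - e)" using e y0 by (simp add: ln_div)
    have key: "(1 - exp (- w)) / (c * w) \<le> dpsi (c * w)"
    proof (cases "c * w \<le> 1")
      case True
      have "1 - exp (- w) \<le> w" using exp_ge_add_one_self[of "- w"] by simp
      also have "w \<le> c * w" using c1 w by simp
      finally show ?thesis using True w cpos by (simp add: dpsi_def)
    next
      case False
      have "1 - exp (- w) \<le> 1" by simp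
      then show ?thesis using False w cpos by (simp add: dpsi_def divide_right_mono)
    qed
    have "(exp (- e) - exp (- y)) / w * (1 - \<rho>) \<le> exp (- e) * dpsi (c * w)"
    proof -
      have "exp (- y) = exp (- e) * exp (- w)" by (simp add: w_def flip: exp_add)
      then have "(exp (- e) - exp (- y)) / w * (1 - \<rho>) = exp (- e) * ((1 - exp (- w)) / (c * w))"
        using w r1 by (simp add: c_def field_simps)
      also have "\<dots> \<le> exp (- e) * dpsi (c * w)" using key by (intro mult_left_mono) auto
      finally show ?thesis .
    qed
    moreover have "(1 - \<rho>) * ((exp (- y) - exp (- e)) / (y - e)) = - ((exp (- e) - exp (- y)) / w * (1 - \<rho>))"
      using w unfolding w_def by (simp add: field_simps)
    ultimately have "0 \<le> (1 - \<rho>) * ((exp (- y) - exp (- e)) / (y - e)) + exp (- e) * dpsi (c * (y - e))"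
      unfolding w_def by linarith
    moreover have "h e = exp (- e) * (ln (y / (y - e)) / \<beta> + (psi (c * (y - e)) + c * \<rho> * dpsi (c * (y - e))) / \<alpha>)
        + ((1 - \<rho>) * ((exp (- y) - exp (- e)) / (y - e)) + exp (- e) * dpsi (c * (y - e))) / \<alpha>"
      unfolding h_def lnq using b0 crho
      by (intro alg_aux) (auto simp: \<alpha>_def)
    ultimately show ?thesis using al by simp
  qed
  have hnn: "0 \<le> h e" if "0 \<le> e" "e < y" for e
    using f0[OF that] fh[OF that] by linarith
  have deriv: "(R has_real_derivative h e) (at e)" if ey: "e < y" for e
  proof -
    have d1: "((\<lambda>e. exp (- y) - exp (- e)) has_real_derivative exp (- e)) (at e)"
      by (auto intro!: derivative_eq_intros)
    have d2: "((\<lambda>e. ln y - ln (y - e)) has_real_derivative 1 / (y - e)) (at e)"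
      using ey by (auto intro!: derivative_eq_intros simp: field_simps)
    have d3: "((\<lambda>e. psi (c * (y - e))) has_real_derivative dpsi (c * (y - e)) * (c * (0 - 1))) (at e)"
      by (rule DERIV_chain2[OF psi_deriv]) (auto intro!: derivative_eq_intros)
    have d4: "((\<lambda>e. exp (- e)) has_real_derivative - exp (- e)) (at e)"
      by (auto intro!: derivative_eq_intros)
    note d5 = DERIV_mult[OF d1 d2]
    note d6 = DERIV_mult[OF d4 d3]
    note d7 = DERIV_cmult[OF d5, of "1 - \<rho>"]
    note d8 = DERIV_diff[OF d7 d6]
    note d9 = DERIV_cdivide[OF d8, of \<alpha>]
    show ?thesis
    proof (rule DERIV_cong)
      show "(R has_real_derivative ((1 - \<rho>) * (exp (- e) * (ln y - ln (y - e)) + (exp (- y) - exp (- e)) * (1 / (y - e))) -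
         (- exp (- e) * psi (c * (y - e)) + exp (- e) * (dpsi (c * (y - e)) * (c * (0 - 1))))) / \<alpha>) (at e)"
        using d9 unfolding R_def by (simp add: ac_simps)
      show "((1 - \<rho>) * (exp (- e) * (ln y - ln (y - e)) + (exp (- y) - exp (- e)) * (1 / (y - e))) -
         (- exp (- e) * psi (c * (y - e)) + exp (- e) * (dpsi (c * (y - e)) * (c * (0 - 1))))) / \<alpha> = h e"
        unfolding h_def by (simp add: algebra_simps add_divide_distrib[symmetric] diff_divide_distrib[symmetric])
    qed
  qed
  have "(\<integral>\<^sup>+e\<in>{0..b}. ennreal (h e) \<partial>lborel) = ennreal (R b - R 0)"
  proof (rule nn_integral_FTC_Icc)
    show "h \<in> borel_measurable borel" unfolding h_def by measurable
  qed (use bb in \<open>auto intro!: deriv hnn\<close>)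
  also have "R b - R 0 \<le> psi (c * y) / \<alpha>"
  proof -
    have q1: "ln y - ln (y - b) \<ge> 0" using bb y0 by simp
    have q2: "exp (- y) - exp (- b) \<le> 0" using bb by simp
    have q3: "psi (c * (y - b)) \<ge> 0" using bb cpos by (intro psi_nonneg) simp
    have p: "(1 - \<rho>) * (exp (- y) - exp (- b)) \<le> 0"
      by (rule mult_nonneg_nonpos) (use r1 q2 in auto)
    have t1: "(1 - \<rho>) * (exp (- y) - exp (- b)) * (ln y - ln (y - b)) \<le> 0"
      by (rule mult_nonpos_nonneg[OF p q1])
    have t2: "exp (- b) * psi (c * (y - b)) \<ge> 0" using q3 by simp
    have "R b \<le> 0" unfolding R_def using al t1 t2
      by (intro divide_nonpos_pos) auto
    moreover have "R 0 = - psi (c * y) / \<alpha>" unfolding R_def by simp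
    ultimately show ?thesis by simp
  qed
  finally show "(\<integral>\<^sup>+e\<in>{0..b}. ennreal (h e) \<partial>lborel) \<le> ennreal (psi (c * y) / \<alpha>)"
    by (simp add: ennreal_leI)
qed


lemma AL:
  fixes \<rho> \<beta> y :: real
  assumes r0: "0 \<le> \<rho>" and r1: "\<rho> < 1" and b0: "\<beta> > 0" and y0: "y > 0"
  defines "\<alpha> \<equiv> \<beta> * (1 - \<rho>)" and "c \<equiv> 1 / (1 - \<rho>)"
  shows "(\<integral>\<^sup>+e. ennreal (exponential_density 1 e) *
            (if e < y then ennreal (ln (y / (y - e)) / \<beta>)
                 + ennreal ((psi (c * (y - e)) + c * \<rho> * dpsi (c * (y - e))) / \<alpha>) else 0) \<partial>lborel)
         \<le> ennreal (psi (c * y) / \<alpha>)"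
proof -
  define h where "h \<equiv> (\<lambda>e. ((1 - \<rho>) * (exp (- e) * (ln y - ln (y - e)) + (exp (- y) - exp (- e)) / (y - e))
                      + exp (- e) * psi (c * (y - e)) + exp (- e) * c * dpsi (c * (y - e))) / \<alpha>)"
  define b where "b = (\<lambda>j::nat. y - y / (real j + 2))"
  define g where "g = (\<lambda>j e. ennreal (h e) * indicator {0..b j} e)"
  have bmono: "b i \<le> b j" if "i \<le> j" for i j
    using that y0 unfolding b_def by (auto intro!: divide_left_mono)
  have b_props: "0 \<le> b j" "b j < y" for j
    using y0 unfolding b_def by (auto simp: field_simps)
  have inc: "incseq g"
    unfolding g_def incseq_def le_fun_def
  proof (intro allI impI)
    fix m n :: nat and x assume "m \<le> n"
    then have "b m \<le> b n" by (rule bmono)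
    then show "ennreal (h x) * indicator {0..b m} x \<le> ennreal (h x) * indicator {0..b n} x"
      by (auto split: split_indicator)
  qed
  have gm: "g j \<in> borel_measurable lborel" for j
    unfolding g_def h_def by measurable
  have pw: "ennreal (exponential_density 1 e) *
            (if e < y then ennreal (ln (y / (y - e)) / \<beta>)
                 + ennreal ((psi (c * (y - e)) + c * \<rho> * dpsi (c * (y - e))) / \<alpha>) else 0)
          \<le> (SUP j. g j e)" for e
  proof (cases "0 \<le> e \<and> e < y")
    case True
    then have e: "0 \<le> e" "e < y" by auto
    have A: "0 \<le> ln (y / (y - e)) / \<beta>" using e y0 b0 by (simp add: ln_ge_zero_iff field_simps)
    have B: "0 \<le> (psi (c * (y - e)) + c * \<rho> * dpsi (c * (y - e))) / \<alpha>"
      using e r0 r1 b0 dpsi_pos[of "c * (y - e)"] psi_nonneg[of "c * (y - e)"]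
      by (auto simp: \<alpha>_def c_def intro!: divide_nonneg_pos add_nonneg_nonneg mult_nonneg_nonneg)
    have "ennreal (exponential_density 1 e) *
            (if e < y then ennreal (ln (y / (y - e)) / \<beta>)
                 + ennreal ((psi (c * (y - e)) + c * \<rho> * dpsi (c * (y - e))) / \<alpha>) else 0)
         = ennreal (exp (- e) * (ln (y / (y - e)) / \<beta> + (psi (c * (y - e)) + c * \<rho> * dpsi (c * (y - e))) / \<alpha>))"
      using e A B by (simp add: exponential_density_def ennreal_mult' ennreal_plus[symmetric] del: ennreal_plus)
    also have "\<dots> \<le> ennreal (h e)"
      using AL_FTC(2)[OF r0 r1 b0 y0 b_props(1)[of 0] b_props(2)[of 0] e] unfolding h_def \<alpha>_def c_def
      by (intro ennreal_leI) simp
    also obtain j where "e \<le> b j"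
    proof -
      obtain j :: nat where j: "y / (y - e) < real j" using reals_Archimedean2 by blast
      have "y / (real j + 2) \<le> y - e"
      proof -
        have "y < real j * (y - e)" using j e by (simp add: field_simps)
        then have "y \<le> (real j + 2) * (y - e)" using e by (simp add: algebra_simps)
        then show ?thesis using e y0 by (simp add: field_simps)
      qed
      then show ?thesis using that[of j] unfolding b_def by simp
    qed
    then have "ennreal (h e) = g j e" using e unfolding g_def by simp
    also have "\<dots> \<le> (SUP j. g j e)" by (rule SUP_upper) simp
    finally show ?thesis .
  next
    case False
    then have "e < 0 \<or> y \<le> e" by auto
    then show ?thesis by (auto simp: exponential_density_def)
  qed
  have "(\<integral>\<^sup>+e. ennreal (exponential_density 1 e) *
            (if e < y then ennreal (ln (y / (y - e)) / \<beta>)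
                 + ennreal ((psi (c * (y - e)) + c * \<rho> * dpsi (c * (y - e))) / \<alpha>) else 0) \<partial>lborel)
        \<le> (\<integral>\<^sup>+e. (SUP j. g j e) \<partial>lborel)"
    by (rule nn_integral_mono) (rule pw)
  also have "\<dots> = (SUP j. integral\<^sup>N lborel (g j))"
    by (rule nn_integral_monotone_convergence_SUP[OF inc gm])
  also have "\<dots> \<le> ennreal (psi (c * y) / \<alpha>)"
  proof (rule SUP_least)
    fix j
    show "integral\<^sup>N lborel (g j) \<le> ennreal (psi (c * y) / \<alpha>)"
      using AL_FTC(1)[OF r0 r1 b0 y0 b_props(1)[of j] b_props(2)[of j]]
      unfolding g_def h_def \<alpha>_def c_def by simp
  qed
  finally show ?thesis .
qed


definition stp :: "real \<Rightarrow> bool \<times> real \<times> real \<Rightarrow> real \<Rightarrow> real \<Rightarrow> bool \<times> real \<times> real" where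
  "stp b s ek zk = (case s of (al, a, y) \<Rightarrow>
      if al \<and> ek < y then (True, a + ln (y / (y - ek)) / b, y - ek + zk) else (False, a, y))"

definition Wf :: "(real \<Rightarrow> real) \<Rightarrow> bool \<times> real \<times> real \<Rightarrow> ennreal" where
  "Wf \<phi> s = ennreal (fst (snd s)) + (if fst s then ennreal (\<phi> (snd (snd s))) else 0)"

lemma ennreal_plus_le: "ennreal (x + y) \<le> ennreal x + ennreal y"
proof (cases "x < 0")
  case True
  then have "ennreal (x + y) \<le> ennreal y" by (intro ennreal_leI) simp
  then show ?thesis by (simp add: add_increasing)
next
  case False
  show ?thesis
  proof (cases "y < 0")
    case True
    then have "ennreal (x + y) \<le> ennreal x" by (intro ennreal_leI) simp
    then show ?thesis by (simp add: add_increasing2)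
  next
    case f2: False
    then show ?thesis using False by (simp add: ennreal_plus)
  qed
qed

lemma step_bound:
  fixes G :: "real measure" and \<rho> \<beta> :: real
  assumes r0: "0 \<le> \<rho>" and r1: "\<rho> < 1" and b0: "\<beta> > 0"
    and G: "prob_space G" "sets G = sets borel" "AE z in G. 0 \<le> z" "integrable G (\<lambda>z. z)"
    and rho: "\<rho> = (\<integral>z. z \<partial>G)"
  defines "\<alpha> \<equiv> \<beta> * (1 - \<rho>)" and "c \<equiv> 1 / (1 - \<rho>)"
  defines "\<phi> \<equiv> (\<lambda>v. psi (c * v) / \<alpha>)"
  shows "(\<integral>\<^sup>+e. (\<integral>\<^sup>+z. Wf \<phi> (stp \<beta> (al, a, y) e z) \<partial>G) \<partial>(density lborel (exponential_density 1)))
          \<le> Wf \<phi> (al, a, y)"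
proof -
  interpret G: prob_space G by (rule G(1))
  let ?EXP = "density lborel (exponential_density 1)"
  interpret EXP: prob_space ?EXP by (rule prob_space_exponential_density) simp
  have al0: "\<alpha> > 0" using b0 r1 by (simp add: \<alpha>_def)
  have cpos: "c > 0" using r1 by (simp add: c_def)
  define X where "X = (\<lambda>e. if al \<and> e < y then ennreal (ln (y / (y - e)) / \<beta>)
                 + ennreal ((psi (c * (y - e)) + c * \<rho> * dpsi (c * (y - e))) / \<alpha>) else 0)"
  have sE: "sets ?EXP = sets borel" by simp
  have Xm: "X \<in> borel_measurable ?EXP"
    unfolding measurable_cong_sets[OF sE refl] X_def by measurable
  have inner: "(\<integral>\<^sup>+z. Wf \<phi> (stp \<beta> (al, a, y) e z) \<partial>G) \<le> ennreal a + X e" for e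
  proof (cases "al \<and> e < y")
    case False
    then have "(\<integral>\<^sup>+z. Wf \<phi> (stp \<beta> (al, a, y) e z) \<partial>G) = (\<integral>\<^sup>+z. ennreal a \<partial>G)"
      by (auto simp: stp_def Wf_def)
    also have "\<dots> = ennreal a" by (simp add: G.emeasure_space_1)
    finally show ?thesis by simp
  next
    case True
    define w where "w = y - e"
    have w: "w > 0" using True by (simp add: w_def)
    define \<Delta> where "\<Delta> = ln (y / (y - e)) / \<beta>"
    have "(\<integral>\<^sup>+z. Wf \<phi> (stp \<beta> (al, a, y) e z) \<partial>G)
          \<le> (\<integral>\<^sup>+z. ennreal a + ennreal \<Delta> + ennreal (\<phi> (w + z)) \<partial>G)"
    proof (rule nn_integral_mono)
      fix z
      have "stp \<beta> (al, a, y) e z = (True, a + \<Delta>, w + z)"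
        using True by (simp add: stp_def w_def \<Delta>_def)
      then have "Wf \<phi> (stp \<beta> (al, a, y) e z) = ennreal (a + \<Delta>) + ennreal (\<phi> (w + z))"
        by (simp add: Wf_def)
      also have "\<dots> \<le> ennreal a + ennreal \<Delta> + ennreal (\<phi> (w + z))"
        by (intro add_right_mono ennreal_plus_le)
      finally show "Wf \<phi> (stp \<beta> (al, a, y) e z) \<le> ennreal a + ennreal \<Delta> + ennreal (\<phi> (w + z))" .
    qed
    also have "\<dots> = ennreal a + ennreal \<Delta> + (\<integral>\<^sup>+z. ennreal (\<phi> (w + z)) \<partial>G)"
    proof -
      have m: "(\<lambda>z. ennreal (\<phi> (w + z))) \<in> borel_measurable G"
        unfolding \<phi>_def measurable_cong_sets[OF G(2) refl] by measurable
      have "(\<integral>\<^sup>+z. ennreal a + ennreal \<Delta> + ennreal (\<phi> (w + z)) \<partial>G)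
            = (\<integral>\<^sup>+z. ennreal a + ennreal \<Delta> \<partial>G) + (\<integral>\<^sup>+z. ennreal (\<phi> (w + z)) \<partial>G)"
        using m by (intro nn_integral_add) auto
      then show ?thesis by (simp add: G.emeasure_space_1)
    qed
    also have "(\<integral>\<^sup>+z. ennreal (\<phi> (w + z)) \<partial>G) \<le> (\<integral>\<^sup>+z. ennreal ((psi (c * w) + dpsi (c * w) * c * z) / \<alpha>) \<partial>G)"
    proof (rule nn_integral_mono_AE)
      show "AE z in G. ennreal (\<phi> (w + z)) \<le> ennreal ((psi (c * w) + dpsi (c * w) * c * z) / \<alpha>)"
        using G(3)
      proof eventually_elim
        case (elim z)
        have "psi (c * w + c * z) \<le> psi (c * w) + dpsi (c * w) * (c * z)"
          using w cpos elim by (intro psi_tangent) auto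
        then show ?case unfolding \<phi>_def using al0
          by (intro ennreal_leI) (simp add: divide_right_mono distrib_left mult.assoc)
      qed
    qed
    also have "(\<integral>\<^sup>+z. ennreal ((psi (c * w) + dpsi (c * w) * c * z) / \<alpha>) \<partial>G)
             = ennreal (\<integral>z. (psi (c * w) + dpsi (c * w) * c * z) / \<alpha> \<partial>G)"
    proof (rule nn_integral_eq_integral)
      show "integrable G (\<lambda>z. (psi (c * w) + dpsi (c * w) * c * z) / \<alpha>)"
        using G(4) by auto
      show "AE z in G. 0 \<le> (psi (c * w) + dpsi (c * w) * c * z) / \<alpha>"
        using G(3)
      proof eventually_elim
        case (elim z)
        then show ?case using w cpos al0 psi_nonneg[of "c * w"] dpsi_pos[of "c * w"]
          by (intro divide_nonneg_pos add_nonneg_nonneg mult_nonneg_nonneg) auto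
      qed
    qed
    also have "(\<integral>z. (psi (c * w) + dpsi (c * w) * c * z) / \<alpha> \<partial>G) = (psi (c * w) + c * \<rho> * dpsi (c * w)) / \<alpha>"
      using G(4) by (simp add: rho G.prob_space)
    finally show ?thesis using True unfolding X_def w_def \<Delta>_def
      by (simp add: add.assoc)
  qed
  have "(\<integral>\<^sup>+e. (\<integral>\<^sup>+z. Wf \<phi> (stp \<beta> (al, a, y) e z) \<partial>G) \<partial>?EXP) \<le> (\<integral>\<^sup>+e. ennreal a + X e \<partial>?EXP)"
    by (intro nn_integral_mono inner)
  also have "\<dots> = ennreal a + (\<integral>\<^sup>+e. X e \<partial>?EXP)"
  proof -
    have u: "emeasure ?EXP UNIV = 1" using EXP.emeasure_space_1 by simp
    show ?thesis using Xm by (subst nn_integral_add) (auto simp: u)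
  qed
  finally have part1: "(\<integral>\<^sup>+e. (\<integral>\<^sup>+z. Wf \<phi> (stp \<beta> (al, a, y) e z) \<partial>G) \<partial>?EXP) \<le> ennreal a + (\<integral>\<^sup>+e. X e \<partial>?EXP)" .
  have "(\<integral>\<^sup>+e. X e \<partial>?EXP) = (\<integral>\<^sup>+e. ennreal (exponential_density 1 e) * X e \<partial>lborel)"
    using Xm by (subst nn_integral_density) (auto simp: measurable_cong_sets[OF sE refl])
  also have "\<dots> \<le> (if al then ennreal (\<phi> y) else 0)"
  proof (cases al)
    case False
    then show ?thesis by (simp add: X_def)
  next
    case True
    show ?thesis
    proof (cases "y > 0")
      case True
      with \<open>al\<close> show ?thesis
        using AL[OF r0 r1 b0 True] unfolding X_def \<phi>_def \<alpha>_def c_def by simp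
    next
      case False
      have "(\<lambda>e. ennreal (exponential_density 1 e) * X e) = (\<lambda>e. 0)"
      proof
        fix e
        show "ennreal (exponential_density 1 e) * X e = 0"
        proof (cases "e < y")
          case True
          then have "e < 0" using False by simp
          then show ?thesis by (simp add: exponential_density_def)
        qed (simp add: X_def)
      qed
      then show ?thesis by simp
    qed
  qed
  finally have fin: "(\<integral>\<^sup>+e. (\<integral>\<^sup>+z. Wf \<phi> (stp \<beta> (al, a, y) e z) \<partial>G) \<partial>?EXP)
      \<le> ennreal a + (if al then ennreal (\<phi> y) else 0)"
    using part1 by (meson add_left_mono order_trans)
  have wf: "Wf \<phi> (al, a, y) = ennreal a + (if al then ennreal (\<phi> y) else 0)" by (simp add: Wf_def)
  show ?thesis unfolding wf by (rule fin)
qed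


fun chain :: "real \<Rightarrow> real \<Rightarrow> (nat \<Rightarrow> real) \<Rightarrow> (nat \<Rightarrow> real) \<Rightarrow> nat \<Rightarrow> bool \<times> real \<times> real" where
  "chain b y0 e z 0 = (True, 0, y0)"
| "chain b y0 e z (Suc k) = stp b (chain b y0 e z k) (e k) (z k)"

lemma chain_local:
  "(\<And>j. j < k \<Longrightarrow> e j = e' j) \<Longrightarrow> (\<And>j. j < k \<Longrightarrow> z j = z' j) \<Longrightarrow>
   chain b y0 e z k = chain b y0 e' z' k"
  by (induction k) auto

lemma stp_components:
  "fst (stp b s ek zk) = (fst s \<and> ek < snd (snd s))"
  "fst (snd (stp b s ek zk)) = (if fst s \<and> ek < snd (snd s)
       then fst (snd s) + ln (snd (snd s) / (snd (snd s) - ek)) / b else fst (snd s))"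
  "snd (snd (stp b s ek zk)) = (if fst s \<and> ek < snd (snd s)
       then snd (snd s) - ek + zk else snd (snd s))"
  by (cases s; auto simp: stp_def)+

lemma chain_meas:
  fixes N :: "'a measure" and e z :: "'a \<Rightarrow> nat \<Rightarrow> real"
  assumes [measurable]: "\<And>k. (\<lambda>\<omega>. e \<omega> k) \<in> borel_measurable N" "\<And>k. (\<lambda>\<omega>. z \<omega> k) \<in> borel_measurable N"
  shows "(\<lambda>\<omega>. fst (chain b y0 (e \<omega>) (z \<omega>) k)) \<in> measurable N (count_space UNIV) \<and>
         (\<lambda>\<omega>. fst (snd (chain b y0 (e \<omega>) (z \<omega>) k))) \<in> borel_measurable N \<and>
         (\<lambda>\<omega>. snd (snd (chain b y0 (e \<omega>) (z \<omega>) k))) \<in> borel_measurable N"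
proof (induction k)
  case 0
  have "(\<lambda>\<omega>. True) \<in> measurable N (count_space UNIV)" by (rule measurable_const) simp
  then show ?case by simp
next
  case (Suc k)
  then have [measurable]: "(\<lambda>\<omega>. fst (chain b y0 (e \<omega>) (z \<omega>) k)) \<in> measurable N (count_space UNIV)"
    "(\<lambda>\<omega>. fst (snd (chain b y0 (e \<omega>) (z \<omega>) k))) \<in> borel_measurable N"
    "(\<lambda>\<omega>. snd (snd (chain b y0 (e \<omega>) (z \<omega>) k))) \<in> borel_measurable N" by auto
  show ?case unfolding chain.simps stp_components by measurable
qed

lemma Wf_chain_meas:
  fixes N :: "'a measure" and e z :: "'a \<Rightarrow> nat \<Rightarrow> real"
  assumes "\<And>k. (\<lambda>\<omega>. e \<omega> k) \<in> borel_measurable N" "\<And>k. (\<lambda>\<omega>. z \<omega> k) \<in> borel_measurable N"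
    and [measurable]: "\<phi> \<in> borel_measurable borel"
  shows "(\<lambda>\<omega>. Wf \<phi> (chain b y0 (e \<omega>) (z \<omega>) k)) \<in> borel_measurable N"
    and "(\<lambda>\<omega>. ennreal (fst (snd (chain b y0 (e \<omega>) (z \<omega>) k)))) \<in> borel_measurable N"
proof -
  note m = chain_meas[where e=e and z=z and N=N, OF assms(1,2)]
  have [measurable]: "(\<lambda>\<omega>. fst (chain b y0 (e \<omega>) (z \<omega>) k)) \<in> measurable N (count_space UNIV)"
    "(\<lambda>\<omega>. fst (snd (chain b y0 (e \<omega>) (z \<omega>) k))) \<in> borel_measurable N"
    "(\<lambda>\<omega>. snd (snd (chain b y0 (e \<omega>) (z \<omega>) k))) \<in> borel_measurable N" using m by auto
  show "(\<lambda>\<omega>. Wf \<phi> (chain b y0 (e \<omega>) (z \<omega>) k)) \<in> borel_measurable N"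
    unfolding Wf_def by measurable
  show "(\<lambda>\<omega>. ennreal (fst (snd (chain b y0 (e \<omega>) (z \<omega>) k)))) \<in> borel_measurable N"
    by measurable
qed

lemma PiM_component_meas:
  assumes "\<And>i. sets (D i) = sets borel"
  shows "(\<lambda>x. x j) \<in> borel_measurable (PiM I D)"
proof (cases "j \<in> I")
  case True
  have "(\<lambda>x. x j) \<in> measurable (PiM I D) (D j)" by (rule measurable_component_singleton[OF True])
  moreover have "measurable (PiM I D) (D j) = measurable (PiM I D) borel"
    by (rule measurable_cong_sets[OF refl assms])
  ultimately show ?thesis by simp
next
  case False
  have "(\<lambda>x. undefined :: real) \<in> borel_measurable (PiM I D)" by simp
  moreover have "\<And>x. x \<in> space (PiM I D) \<Longrightarrow> undefined = x j"
    using False by (auto simp: space_PiM PiE_def extensional_def)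
  ultimately show ?thesis using measurable_cong[of "PiM I D" "\<lambda>x. undefined" "\<lambda>x. x j" borel] by simp
qed

definition Iset :: "nat \<Rightarrow> (nat + nat) set" where
  "Iset m = Inl ` {..<m} \<union> Inr ` {..<m}"

lemma Iset_Suc: "Iset (Suc m) = insert (Inr m) (insert (Inl m) (Iset m))"
  unfolding Iset_def lessThan_Suc by auto

lemma finite_Iset: "finite (Iset m)" unfolding Iset_def by auto

lemma prod_bound:
  fixes G :: "real measure" and \<rho> \<beta> y0 :: real
  assumes r0: "0 \<le> \<rho>" and r1: "\<rho> < 1" and b0: "\<beta> > 0"
    and G: "prob_space G" "sets G = sets borel" "AE z in G. 0 \<le> z" "integrable G (\<lambda>z. z)"
    and rho: "\<rho> = (\<integral>z. z \<partial>G)"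
  defines "\<alpha> \<equiv> \<beta> * (1 - \<rho>)" and "c \<equiv> 1 / (1 - \<rho>)"
  defines "\<phi> \<equiv> (\<lambda>v. psi (c * v) / \<alpha>)"
  defines "D \<equiv> (\<lambda>i::nat + nat. case i of Inl _ \<Rightarrow> density lborel (exponential_density 1) | Inr _ \<Rightarrow> G)"
  shows "(\<integral>\<^sup>+x. Wf \<phi> (chain \<beta> y0 (\<lambda>k. x (Inl k)) (\<lambda>k. x (Inr k)) m) \<partial>(PiM (Iset m) D))
           \<le> ennreal (\<phi> y0)"
proof -
  have sD: "sets (D i) = sets borel" for i using G(2) by (cases i) (auto simp: D_def)
  have pD: "prob_space (D i)" for i
    using G(1) by (cases i) (auto simp: D_def intro: prob_space_exponential_density)
  interpret product_sigma_finite D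
    by (rule product_sigma_finite.intro) (rule prob_space_imp_sigma_finite[OF pD])
  have phim[measurable]: "\<phi> \<in> borel_measurable borel" unfolding \<phi>_def by measurable
  define W where "W m x = Wf \<phi> (chain \<beta> y0 (\<lambda>k. x (Inl k)) (\<lambda>k. x (Inr k)) m)" for m x
  have Wm: "W m \<in> borel_measurable (PiM I D)" for m I
    unfolding W_def
    by (rule Wf_chain_meas(1)[OF PiM_component_meas[OF sD] PiM_component_meas[OF sD] phim])
  have "(\<integral>\<^sup>+x. W m x \<partial>(PiM (Iset m) D)) \<le> ennreal (\<phi> y0)"
  proof (induction m)
    case 0
    have "(\<integral>\<^sup>+x. W 0 x \<partial>(PiM (Iset 0) D)) = (\<integral>\<^sup>+x. W 0 x \<partial>count_space {\<lambda>_. undefined})"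
      by (simp add: Iset_def PiM_empty)
    also have "\<dots> = W 0 (\<lambda>_. undefined)" by (simp add: nn_integral_count_space_finite)
    also have "\<dots> = ennreal (\<phi> y0)" by (simp add: W_def Wf_def)
    finally show ?case by simp
  next
    case (Suc m)
    let ?J = "insert (Inl m) (Iset m)"
    have nJ: "Inr m \<notin> ?J" by (auto simp: Iset_def)
    have nI: "Inl m \<notin> Iset m" by (auto simp: Iset_def)
    have fJ: "finite ?J" "finite (Iset m)" by (auto simp: finite_Iset)
    have "(\<integral>\<^sup>+x. W (Suc m) x \<partial>(PiM (Iset (Suc m)) D))
        = (\<integral>\<^sup>+x. (\<integral>\<^sup>+z. W (Suc m) (x(Inr m := z)) \<partial>D (Inr m)) \<partial>(PiM ?J D))"
      unfolding Iset_Suc by (rule product_nn_integral_insert[OF fJ(1) nJ]) (rule Wm)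
    also have "\<dots> = (\<integral>\<^sup>+x. (\<integral>\<^sup>+e. (\<integral>\<^sup>+z. W (Suc m) (x(Inl m := e, Inr m := z)) \<partial>D (Inr m)) \<partial>D (Inl m)) \<partial>(PiM (Iset m) D))"
    proof (rule product_nn_integral_insert[OF fJ(2) nI])
      have "(\<lambda>(x, z). W (Suc m) (x(Inr m := z))) \<in> borel_measurable (PiM ?J D \<Otimes>\<^sub>M D (Inr m))"
        using measurable_comp[OF measurable_add_dim[of "Inr m" ?J D] Wm[of "Suc m" "insert (Inr m) ?J"]]
        by (simp add: o_def case_prod_beta')
      then show "(\<lambda>x. \<integral>\<^sup>+z. W (Suc m) (x(Inr m := z)) \<partial>D (Inr m)) \<in> borel_measurable (PiM ?J D)"
        by (rule M.borel_measurable_nn_integral)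
    qed
    also have "\<dots> \<le> (\<integral>\<^sup>+x. W m x \<partial>(PiM (Iset m) D))"
    proof (rule nn_integral_mono)
      fix x
      obtain al a y where s: "chain \<beta> y0 (\<lambda>k. x (Inl k)) (\<lambda>k. x (Inr k)) m = (al, a, y)"
        by (cases "chain \<beta> y0 (\<lambda>k. x (Inl k)) (\<lambda>k. x (Inr k)) m") auto
      have loc: "chain \<beta> y0 (\<lambda>k. (x(Inl m := e, Inr m := z)) (Inl k)) (\<lambda>k. (x(Inl m := e, Inr m := z)) (Inr k)) m
                 = (al, a, y)" for e z
        by (subst s[symmetric], rule chain_local) auto
      have "W (Suc m) (x(Inl m := e, Inr m := z)) = Wf \<phi> (stp \<beta> (al, a, y) e z)" for e z
        unfolding W_def chain.simps loc by simp
      then have "(\<integral>\<^sup>+e. (\<integral>\<^sup>+z. W (Suc m) (x(Inl m := e, Inr m := z)) \<partial>D (Inr m)) \<partial>D (Inl m))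
          = (\<integral>\<^sup>+e. (\<integral>\<^sup>+z. Wf \<phi> (stp \<beta> (al, a, y) e z) \<partial>G) \<partial>(density lborel (exponential_density 1)))"
        by (simp add: D_def)
      also have "\<dots> \<le> Wf \<phi> (al, a, y)"
        unfolding \<phi>_def \<alpha>_def c_def by (rule step_bound[OF r0 r1 b0 G rho])
      also have "\<dots> = W m x" by (simp add: W_def s)
      finally show "(\<integral>\<^sup>+e. (\<integral>\<^sup>+z. W (Suc m) (x(Inl m := e, Inr m := z)) \<partial>D (Inr m)) \<partial>D (Inl m)) \<le> W m x" .
    qed
    finally show ?case using Suc by simp
  qed
  then show ?thesis by (simp add: W_def)
qed


lemma integral_exp_piece:
  fixes \<beta> y a t :: real and f :: "real \<Rightarrow> real"
  assumes "a \<le> t" and f: "\<And>u. u > a \<Longrightarrow> f u = \<beta> * y * exp (- \<beta> * (u - a))" and b0: "\<beta> > 0"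
  shows "integral {a..t} f = y * (1 - exp (- \<beta> * (t - a)))"
proof -
  have "integral {a..t} f = integral {a..t} (\<lambda>u. \<beta> * y * exp (- \<beta> * (u - a)))"
  proof (rule integral_spike[of "{a}"])
    show "negligible {a}" by simp
    show "\<And>x. x \<in> {a..t} - {a} \<Longrightarrow> \<beta> * y * exp (- \<beta> * (x - a)) = f x" using f by auto
  qed
  also have "\<dots> = (- y * exp (- \<beta> * (t - a))) - (- y * exp (- \<beta> * (a - a)))"
  proof (rule integral_unique, rule fundamental_theorem_of_calculus[OF assms(1)])
    fix x assume "x \<in> {a..t}"
    have "((\<lambda>u. - y * exp (- \<beta> * (u - a))) has_real_derivative \<beta> * y * exp (- \<beta> * (x - a))) (at x)"
      by (auto intro!: derivative_eq_intros)
    then show "((\<lambda>u. - y * exp (- \<beta> * (u - a))) has_vector_derivative \<beta> * y * exp (- \<beta> * (x - a))) (at x within {a..t})"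
      unfolding has_real_derivative_iff_has_vector_derivative by (rule has_vector_derivative_at_within)
  qed
  finally show ?thesis by (simp add: algebra_simps)
qed

lemma next_set_eq:
  fixes \<beta> y a x :: real and f :: "real \<Rightarrow> real"
  assumes f: "\<And>u. u > a \<Longrightarrow> f u = \<beta> * y * exp (- \<beta> * (u - a))" and b0: "\<beta> > 0" and y: "y > 0" and x: "x > 0"
  shows "x < y \<Longrightarrow> {t. a \<le> t \<and> x \<le> integral {a..t} f} = {a + ln (y / (y - x)) / \<beta>..}"
    and "\<not> x < y \<Longrightarrow> {t. a \<le> t \<and> x \<le> integral {a..t} f} = {}"
proof -
  have I: "a \<le> t \<Longrightarrow> integral {a..t} f = y * (1 - exp (- \<beta> * (t - a)))" for t
    using integral_exp_piece[OF _ f b0] by blast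
  show "{t. a \<le> t \<and> x \<le> integral {a..t} f} = {}" if "\<not> x < y"
  proof -
    have "y * (1 - exp (- \<beta> * (t - a))) < x" for t
    proof -
      have "y * exp (- \<beta> * (t - a)) > 0" using y by simp
      then show ?thesis using that by (simp add: algebra_simps)
    qed
    then show ?thesis using I by (auto simp: not_le[symmetric])
  qed
  assume xy: "x < y"
  have D0: "ln (y / (y - x)) \<ge> 0" using xy x by (simp add: ln_ge_zero_iff field_simps)
  have iff: "x \<le> y * (1 - exp (- \<beta> * (t - a))) \<longleftrightarrow> a + ln (y / (y - x)) / \<beta> \<le> t" for t
  proof -
    have "x \<le> y * (1 - exp (- \<beta> * (t - a))) \<longleftrightarrow> exp (- \<beta> * (t - a)) \<le> (y - x) / y"
      using y by (simp add: field_simps)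
    also have "\<dots> \<longleftrightarrow> - \<beta> * (t - a) \<le> ln ((y - x) / y)"
      using y xy by (subst ln_ge_iff) auto
    also have "ln ((y - x) / y) = - ln (y / (y - x))"
      using y xy by (simp add: ln_div)
    also have "(- \<beta> * (t - a) \<le> - ln (y / (y - x))) \<longleftrightarrow> ln (y / (y - x)) / \<beta> \<le> t - a"
      using b0 by (simp add: field_simps)
    finally show ?thesis by linarith
  qed
  show "{t. a \<le> t \<and> x \<le> integral {a..t} f} = {a + ln (y / (y - x)) / \<beta>..}"
  proof (intro set_eqI iffI)
    fix t assume "t \<in> {t. a \<le> t \<and> x \<le> integral {a..t} f}"
    then show "t \<in> {a + ln (y / (y - x)) / \<beta>..}" using I iff by auto
  next
    fix t assume t: "t \<in> {a + ln (y / (y - x)) / \<beta>..}"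
    then have "a \<le> t" using D0 b0 by (auto intro: order_trans[rotated] simp: divide_nonneg_pos)
    then show "t \<in> {t. a \<le> t \<and> x \<le> integral {a..t} f}" using I iff t by auto
  qed
qed

lemma lambda_append:
  "hawkes_lambda \<beta> l0 z (ps @ [t]) u = hawkes_lambda \<beta> l0 z ps u
     + (if 0 \<le> t \<and> t < u then \<beta> * z (length ps) * exp (- \<beta> * (u - t)) else 0)"
proof -
  have "(\<Sum>i<length ps. if 0 \<le> (ps @ [t]) ! i \<and> (ps @ [t]) ! i < u
                        then \<beta> * z i * exp (- \<beta> * (u - (ps @ [t]) ! i)) else 0)
      = (\<Sum>i<length ps. if 0 \<le> ps ! i \<and> ps ! i < u
                        then \<beta> * z i * exp (- \<beta> * (u - ps ! i)) else 0)"
    by (rule sum.cong) (auto simp: nth_append)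
  then show ?thesis unfolding hawkes_lambda_def by (simp add: nth_append)
qed


definition Inv :: "real \<Rightarrow> real \<Rightarrow> (nat \<Rightarrow> real) \<Rightarrow> nat \<Rightarrow> real list \<Rightarrow> bool \<times> real \<times> real \<Rightarrow> bool" where
  "Inv \<beta> l0 z k ps s = (case s of (al, a, y) \<Rightarrow>
     (al \<longrightarrow> length ps = k \<and> (\<forall>i<k. 0 \<le> ps ! i \<and> ps ! i \<le> a) \<and> (0 < k \<longrightarrow> last ps = a) \<and> 0 \<le> a \<and> 0 < y
            \<and> (\<forall>u>a. hawkes_lambda \<beta> l0 z ps u = \<beta> * y * exp (- \<beta> * (u - a))))
     \<and> (\<not> al \<longrightarrow> length ps < k))"

lemma invariant:
  fixes \<beta> l0 :: real and e z :: "nat \<Rightarrow> real"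
  assumes b0: "\<beta> > 0" and l0: "l0 > 0" and ep: "\<And>k. e k > 0" and zp: "\<And>k. z k \<ge> 0"
  shows "Inv \<beta> l0 z k (hawkes_pts \<beta> l0 e z k) (chain \<beta> (l0 / \<beta>) e z k)"
proof (induction k)
  case 0
  show ?case using b0 l0 by (simp add: Inv_def hawkes_lambda_def)
next
  case (Suc k)
  obtain al a y where s: "chain \<beta> (l0 / \<beta>) e z k = (al, a, y)" by (cases "chain \<beta> (l0 / \<beta>) e z k") auto
  define ps where "ps = hawkes_pts \<beta> l0 e z k"
  define S where "S = hawkes_next_set \<beta> l0 z ps (e k)"
  have k0: "k = 0 \<Longrightarrow> a = 0" using s by auto
  have IH: "Inv \<beta> l0 z k ps (al, a, y)" using Suc s by (simp add: ps_def)
  have pts: "hawkes_pts \<beta> l0 e z (Suc k) = (if length ps = k \<and> S \<noteq> {} then ps @ [Inf S] else ps)"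
    by (simp add: ps_def S_def Let_def)
  show ?case
  proof (cases "al \<and> e k < y")
    case False
    then have st: "chain \<beta> (l0 / \<beta>) e z (Suc k) = (False, a, y)" by (simp add: s stp_def)
    have "length (hawkes_pts \<beta> l0 e z (Suc k)) < Suc k"
    proof (cases al)
      case True
      then have I: "length ps = k" "0 < y" "\<forall>u>a. hawkes_lambda \<beta> l0 z ps u = \<beta> * y * exp (- \<beta> * (u - a))"
        "0 < k \<longrightarrow> last ps = a" "0 \<le> a"
        using IH by (auto simp: Inv_def)
      have a0: "(if ps = [] then 0 else last ps) = a"
        using I(1,4) k0 by (cases k) auto
      have "\<not> e k < y" using False True by simp
      then have "S = {}" unfolding S_def hawkes_next_set_def Let_def a0
        using next_set_eq(2)[of a "hawkes_lambda \<beta> l0 z ps" \<beta> y "e k"] I b0 ep by auto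
      then show ?thesis using pts I by simp
    next
      case False
      then show ?thesis using IH pts by (auto simp: Inv_def)
    qed
    then show ?thesis unfolding st by (simp add: Inv_def)
  next
    case True
    then have al: al and ey: "e k < y" by auto
    have I: "length ps = k" "0 < y" "\<forall>u>a. hawkes_lambda \<beta> l0 z ps u = \<beta> * y * exp (- \<beta> * (u - a))"
      "0 < k \<longrightarrow> last ps = a" "0 \<le> a" "\<forall>i<k. 0 \<le> ps ! i \<and> ps ! i \<le> a"
      using IH al by (auto simp: Inv_def)
    have a0: "(if ps = [] then 0 else last ps) = a"
      using I(1,4) k0 by (cases k) auto
    define \<Delta> where "\<Delta> = ln (y / (y - e k)) / \<beta>"
    have D0: "\<Delta> \<ge> 0" using ey ep[of k] b0 by (simp add: \<Delta>_def ln_ge_zero_iff field_simps)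
    have S: "S = {a + \<Delta>..}" unfolding S_def hawkes_next_set_def Let_def a0 \<Delta>_def
      using next_set_eq(1)[of a "hawkes_lambda \<beta> l0 z ps" \<beta> y "e k"] I b0 ep ey by auto
    have st: "chain \<beta> (l0 / \<beta>) e z (Suc k) = (True, a + \<Delta>, y - e k + z k)"
      using True by (simp add: s stp_def \<Delta>_def)
    have newps: "hawkes_pts \<beta> l0 e z (Suc k) = ps @ [a + \<Delta>]" using pts S I(1) by simp
    have expD: "exp (- \<beta> * \<Delta>) = (y - e k) / y"
    proof -
      have "- \<beta> * \<Delta> = ln ((y - e k) / y)" using b0 ey I(2) by (simp add: \<Delta>_def ln_div)
      then show ?thesis using ey I(2) by simp
    qed
    have lam: "hawkes_lambda \<beta> l0 z (ps @ [a + \<Delta>]) u = \<beta> * (y - e k + z k) * exp (- \<beta> * (u - (a + \<Delta>)))"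
      if u: "u > a + \<Delta>" for u
    proof -
      have "hawkes_lambda \<beta> l0 z (ps @ [a + \<Delta>]) u
          = \<beta> * y * exp (- \<beta> * (u - a)) + \<beta> * z k * exp (- \<beta> * (u - (a + \<Delta>)))"
        unfolding lambda_append using I u D0 by auto
      also have "exp (- \<beta> * (u - a)) = exp (- \<beta> * (u - (a + \<Delta>))) * exp (- \<beta> * \<Delta>)"
        by (simp add: mult_exp_exp algebra_simps)
      finally have h1: "hawkes_lambda \<beta> l0 z (ps @ [a + \<Delta>]) u
          = \<beta> * y * (exp (- \<beta> * (u - (a + \<Delta>))) * ((y - e k) / y)) + \<beta> * z k * exp (- \<beta> * (u - (a + \<Delta>)))"
        unfolding expD .
      have h2: "\<beta> * y * (exp (- \<beta> * (u - (a + \<Delta>))) * ((y - e k) / y)) = \<beta> * (y - e k) * exp (- \<beta> * (u - (a + \<Delta>)))"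
        using I(2) by (simp add: field_simps)
      show ?thesis unfolding h1 h2 by (simp add: algebra_simps)
    qed
    have "y - e k + z k > 0" using ey zp[of k] by simp
    moreover have "\<forall>i<Suc k. 0 \<le> (ps @ [a + \<Delta>]) ! i \<and> (ps @ [a + \<Delta>]) ! i \<le> a + \<Delta>"
      using I D0 by (auto simp: nth_append less_Suc_eq)
    ultimately show ?thesis unfolding st newps Inv_def using I D0 lam by simp
  qed
qed


lemma hawkes_T_chain:
  fixes \<beta> l0 :: real and e z :: "nat \<Rightarrow> real"
  assumes b0: "\<beta> > 0" and l0: "l0 > 0" and ep: "\<And>k. e k > 0" and zp: "\<And>k. z k \<ge> 0"
  shows "hawkes_T \<beta> l0 e z i = (if fst (chain \<beta> (l0 / \<beta>) e z (Suc i))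
           then ereal (fst (snd (chain \<beta> (l0 / \<beta>) e z (Suc i)))) else \<infinity>)"
proof -
  obtain al a y where s: "chain \<beta> (l0 / \<beta>) e z (Suc i) = (al, a, y)"
    by (cases "chain \<beta> (l0 / \<beta>) e z (Suc i)") auto
  define ps where "ps = hawkes_pts \<beta> l0 e z (Suc i)"
  have I: "Inv \<beta> l0 z (Suc i) ps (al, a, y)"
    using invariant[where e=e and z=z and k="Suc i", OF b0 l0 ep zp] s by (simp add: ps_def)
  show ?thesis
  proof (cases al)
    case True
    then have "length ps = Suc i" "last ps = a" using I by (auto simp: Inv_def)
    then have "ps ! i = a" using last_conv_nth[of ps] by fastforce
    then show ?thesis using True \<open>length ps = Suc i\<close> s
      unfolding hawkes_T_def Let_def ps_def[symmetric] by simp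
  next
    case False
    then have "length ps < Suc i" using I by (auto simp: Inv_def)
    then show ?thesis using False s unfolding hawkes_T_def Let_def ps_def[symmetric] by simp
  qed
qed

lemma Tgamma_bound:
  fixes \<beta> l0 \<gamma> :: real and e z :: "nat \<Rightarrow> real"
  assumes b0: "\<beta> > 0" and l0: "l0 > 0" and ep: "\<And>k. e k > 0" and zp: "\<And>k. z k \<ge> 0"
    and g1: "\<gamma> \<le> 1"
  shows "hawkes_Tgamma \<beta> l0 \<gamma> e z \<le> (SUP m. ennreal (fst (snd (chain \<beta> (l0 / \<beta>) e z m))))"
    (is "_ \<le> ?A")
proof (cases "?A = \<top>")
  case True
  show ?thesis by (simp only: True top_greatest)
next
  case False
  then obtain s where sA: "?A = ennreal s" and s0: "0 \<le> s" by (cases ?A) auto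
  let ?T = "hawkes_T \<beta> l0 e z"
  have Tfin: "?T i < \<infinity> \<Longrightarrow> 0 \<le> ?T i \<and> ?T i \<le> ereal s" for i
  proof -
    assume "?T i < \<infinity>"
    then have al: "fst (chain \<beta> (l0 / \<beta>) e z (Suc i))" and
      T: "?T i = ereal (fst (snd (chain \<beta> (l0 / \<beta>) e z (Suc i))))"
      using hawkes_T_chain[where e=e and z=z and i=i, OF b0 l0 ep zp] by (auto split: if_splits)
    obtain al' a y where c: "chain \<beta> (l0 / \<beta>) e z (Suc i) = (al', a, y)"
      by (cases "chain \<beta> (l0 / \<beta>) e z (Suc i)") auto
    have "Inv \<beta> l0 z (Suc i) (hawkes_pts \<beta> l0 e z (Suc i)) (al', a, y)"
      using invariant[where e=e and z=z and k="Suc i", OF b0 l0 ep zp] c by simp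
    then have a0: "0 \<le> a" using al c by (auto simp: Inv_def)
    have "ennreal a \<le> ?A" using c by (intro SUP_upper2[of "Suc i"]) auto
    then have "a \<le> s" using sA a0 s0 by simp
    then show ?thesis using T c a0 by simp
  qed
  show ?thesis
  proof (rule ennreal_le_epsilon)
    fix \<epsilon> :: real assume \<epsilon>: "0 < \<epsilon>"
    define t where "t = s + \<epsilon>"
    have t0: "0 < t" using s0 \<epsilon> by (simp add: t_def)
    have sets: "{i. 0 \<le> ?T i \<and> ?T i < ereal t} = {i. 0 \<le> ?T i \<and> ?T i < \<infinity>}"
    proof (intro set_eqI iffI)
      fix i assume "i \<in> {i. 0 \<le> ?T i \<and> ?T i < \<infinity>}"
      then have "?T i \<le> ereal s" using Tfin by auto
      also have "ereal s < ereal t" using \<epsilon> by (simp add: t_def)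
      finally show "i \<in> {i. 0 \<le> ?T i \<and> ?T i < ereal t}" using \<open>i \<in> _\<close> by auto
    qed (auto intro: order.strict_trans)
    have N: "hawkes_N \<beta> l0 e z t = hawkes_Ninf \<beta> l0 e z"
      unfolding hawkes_N_def hawkes_Ninf_def sets ..
    have "\<gamma> * real (hawkes_Ninf \<beta> l0 e z) \<le> real (hawkes_N \<beta> l0 e z t)"
      unfolding N using mult_right_mono[OF g1, of "real (hawkes_Ninf \<beta> l0 e z)"] by simp
    then have "ennreal t \<in> {ennreal t | t. 0 < t \<and>
            real (hawkes_N \<beta> l0 e z t) \<ge> \<gamma> * real (hawkes_Ninf \<beta> l0 e z)}"
      using t0 by blast
    then have "hawkes_Tgamma \<beta> l0 \<gamma> e z \<le> ennreal t"
      unfolding hawkes_Tgamma_def by (rule Inf_lower)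
    also have "ennreal t = ?A + ennreal \<epsilon>" using sA s0 \<epsilon> by (simp add: t_def ennreal_plus)
    finally show "hawkes_Tgamma \<beta> l0 \<gamma> e z \<le> ?A + ennreal \<epsilon>" .
  qed
qed


lemma chain_time_mono:
  fixes \<beta> l0 :: real and e z :: "nat \<Rightarrow> real"
  assumes b0: "\<beta> > 0" and l0: "l0 > 0" and ep: "\<And>k. e k > 0" and zp: "\<And>k. z k \<ge> 0"
  shows "fst (snd (chain \<beta> (l0 / \<beta>) e z m)) \<le> fst (snd (chain \<beta> (l0 / \<beta>) e z (Suc m)))"
proof -
  obtain al a y where s: "chain \<beta> (l0 / \<beta>) e z m = (al, a, y)"
    by (cases "chain \<beta> (l0 / \<beta>) e z m") auto
  have I: "Inv \<beta> l0 z m (hawkes_pts \<beta> l0 e z m) (al, a, y)"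
    using invariant[where e=e and z=z and k=m, OF b0 l0 ep zp] s by simp
  show ?thesis
  proof (cases "al \<and> e m < y")
    case True
    then have "y > 0" using I by (auto simp: Inv_def)
    then have "ln (y / (y - e m)) \<ge> 0" using True ep[of m] by (simp add: ln_ge_zero_iff field_simps)
    then show ?thesis using True s b0 by (simp add: stp_def)
  next
    case False
    then show ?thesis using s by (auto simp: stp_def)
  qed
qed

theorem corollaryA4:
  fixes M :: "'a measure" and G :: "real measure"
    and E Z :: "nat \<Rightarrow> 'a \<Rightarrow> real"
    and \<beta> \<rho>1 \<alpha> :: real
  assumes "prob_space M"
    and "prob_space G" and "sets G = sets borel"
    and "AE z in G. 0 \<le> z"
    and "integrable G (\<lambda>z. z)"
    and "\<rho>1 = (\<integral>z. z \<partial>G)"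
    and "0 \<le> \<rho>1" and "\<rho>1 < 1"
    and "\<beta> > 0"
    and "\<alpha> = \<beta> * (1 - \<rho>1)"
    and "prob_space.indep_vars M (\<lambda>_. borel)
           (\<lambda>j. case j of Inl k \<Rightarrow> E k | Inr k \<Rightarrow> Z k) UNIV"
    and "\<And>k. distributed M lborel (E k) (exponential_density 1)"
    and "\<And>k. distr M borel (Z k) = G"
  shows "\<exists>r :: nat \<Rightarrow> real. r \<longlonglongrightarrow> 0 \<and>
           (\<forall>\<^sub>F n in sequentially.
              (\<integral>\<^sup>+ \<omega>. hawkes_Tgamma \<beta> (\<alpha> * real n) (1 - 1 / real n)
                         (\<lambda>k. E k \<omega>) (\<lambda>k. Z k \<omega>) \<partial>M)
              \<le> ennreal ((ln (real n) + 1 + r n) / \<alpha>))"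
proof -
  interpret M: prob_space M by (rule assms(1))
  note G = assms(2-5)
  note r0 = assms(7) and r1 = assms(8) and b0 = assms(9)
  define X where "X = (\<lambda>j. case j of Inl k \<Rightarrow> E k | Inr k \<Rightarrow> Z k)"
  have ind: "M.indep_vars (\<lambda>_. borel) X UNIV" using assms(11) by (simp add: X_def)
  have rv: "X i \<in> borel_measurable M" for i
    using ind unfolding M.indep_vars_def2 by auto
  have Em[measurable]: "E k \<in> borel_measurable M" for k using rv[of "Inl k"] by (simp add: X_def)
  have Zm[measurable]: "Z k \<in> borel_measurable M" for k using rv[of "Inr k"] by (simp add: X_def)
  define D where "D \<equiv> (\<lambda>i::nat + nat. case i of Inl _ \<Rightarrow> density lborel (exponential_density 1) | Inr _ \<Rightarrow> G)"
  have distrX: "distr M borel (X i) = D i" for i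
  proof (cases i)
    case (Inl k)
    have "distr M borel (E k) = distr M lborel (E k)" by (rule distr_cong) auto
    also have "\<dots> = density lborel (exponential_density 1)"
      by (rule distributed_distr_eq_density[OF assms(12)])
    finally show ?thesis using Inl by (simp add: X_def D_def)
  next
    case (Inr k)
    then show ?thesis using assms(13) by (simp add: X_def D_def)
  qed
  define \<alpha>' where "\<alpha>' = \<beta> * (1 - \<rho>1)"
  define c where "c = 1 / (1 - \<rho>1)"
  define \<phi> where "\<phi> = (\<lambda>v. psi (c * v) / \<alpha>')"
  have al0: "\<alpha> > 0" using assms(10) b0 r1 by simp
  have key: "(\<integral>\<^sup>+\<omega>. ennreal (fst (snd (chain \<beta> y0 (\<lambda>k. E k \<omega>) (\<lambda>k. Z k \<omega>) m))) \<partial>M) \<le> ennreal (\<phi> y0)"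
    for y0 m
  proof (cases "m = 0")
    case True
    then show ?thesis by simp
  next
    case False
    let ?I = "Iset m"
    let ?T = "\<lambda>\<omega>. \<lambda>i\<in>?I. X i \<omega>"
    define g where "g x = ennreal (fst (snd (chain \<beta> y0 (\<lambda>k. x (Inl k)) (\<lambda>k. x (Inr k)) m)))" for x
    have Ine: "?I \<noteq> {}" using False by (auto simp: Iset_def)
    have Tm: "?T \<in> measurable M (PiM ?I (\<lambda>_. borel))"
      by (rule measurable_restrict) (rule rv)
    have gm: "g \<in> borel_measurable (PiM ?I (\<lambda>_. borel))"
      unfolding g_def by (rule Wf_chain_meas(2)[where \<phi>=psi, OF PiM_component_meas PiM_component_meas]) auto
    have dPi: "distr M (PiM ?I (\<lambda>_. borel)) ?T = PiM ?I D"
    proof -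
      have "distr M (PiM ?I (\<lambda>_. borel)) ?T = PiM ?I (\<lambda>i. distr M borel (X i))"
        using M.indep_vars_iff_distr_eq_PiM[where M'="\<lambda>_. borel" and X=X, OF Ine] rv M.indep_vars_subset[OF ind]
        by auto
      also have "\<dots> = PiM ?I D" by (rule PiM_cong) (auto simp: distrX)
      finally show ?thesis .
    qed
    have "(\<integral>\<^sup>+\<omega>. ennreal (fst (snd (chain \<beta> y0 (\<lambda>k. E k \<omega>) (\<lambda>k. Z k \<omega>) m))) \<partial>M)
        = (\<integral>\<^sup>+\<omega>. g (?T \<omega>) \<partial>M)"
    proof (rule nn_integral_cong)
      fix \<omega>
      have "chain \<beta> y0 (\<lambda>k. E k \<omega>) (\<lambda>k. Z k \<omega>) m = chain \<beta> y0 (\<lambda>k. ?T \<omega> (Inl k)) (\<lambda>k. ?T \<omega> (Inr k)) m"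
        by (rule chain_local) (auto simp: Iset_def X_def)
      then show "ennreal (fst (snd (chain \<beta> y0 (\<lambda>k. E k \<omega>) (\<lambda>k. Z k \<omega>) m))) = g (?T \<omega>)"
        by (simp add: g_def)
    qed
    also have "\<dots> = (\<integral>\<^sup>+x. g x \<partial>distr M (PiM ?I (\<lambda>_. borel)) ?T)"
      by (rule nn_integral_distr[symmetric, OF Tm]) (simp add: gm)
    also have "\<dots> = (\<integral>\<^sup>+x. g x \<partial>PiM ?I D)" by (simp add: dPi)
    also have "\<dots> \<le> (\<integral>\<^sup>+x. Wf \<phi> (chain \<beta> y0 (\<lambda>k. x (Inl k)) (\<lambda>k. x (Inr k)) m) \<partial>PiM ?I D)"
      by (rule nn_integral_mono) (simp add: g_def Wf_def)
    also have "\<dots> \<le> ennreal (\<phi> y0)"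
      unfolding \<phi>_def \<alpha>'_def c_def D_def
      by (rule prod_bound[OF r0 r1 b0 G assms(6)])
    finally show ?thesis .
  qed
  have AEgood: "AE \<omega> in M. (\<forall>k. E k \<omega> > 0) \<and> (\<forall>k. Z k \<omega> \<ge> 0)"
  proof -
    have "AE \<omega> in M. E k \<omega> > 0" for k
    proof (rule AE_distrD[OF Em])
      have "AE x in density lborel (exponential_density 1). x > 0"
      proof (subst AE_density)
        show "AE x in lborel. 0 < ennreal (exponential_density 1 x) \<longrightarrow> 0 < x"
          using AE_lborel_singleton[of 0]
          by eventually_elim (auto simp: exponential_density_def)
      qed simp
      moreover have eq: "distr M borel (E k) = density lborel (exponential_density 1)"
        using distrX[of "Inl k"] by (simp add: X_def D_def)
      ultimately show "AE x in distr M borel (E k). x > 0" by (simp only: eq)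
    qed
    moreover have "AE \<omega> in M. Z k \<omega> \<ge> 0" for k
    proof (rule AE_distrD[OF Zm])
      show "AE x in distr M borel (Z k). 0 \<le> x" unfolding assms(13) by (rule G(3))
    qed
    ultimately show ?thesis by (simp add: AE_all_countable)
  qed
  have main: "(\<integral>\<^sup>+ \<omega>. hawkes_Tgamma \<beta> (\<alpha> * real n) (1 - 1 / real n) (\<lambda>k. E k \<omega>) (\<lambda>k. Z k \<omega>) \<partial>M)
              \<le> ennreal ((ln (real n) + 1 + 0) / \<alpha>)" if n: "n \<ge> 1" for n
  proof -
    define l0 where "l0 = \<alpha> * real n"
    have l0: "l0 > 0" using al0 n by (simp add: l0_def)
    define tm where "tm m \<omega> = ennreal (fst (snd (chain \<beta> (l0 / \<beta>) (\<lambda>k. E k \<omega>) (\<lambda>k. Z k \<omega>) m)))" for m \<omega>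
    have "(\<integral>\<^sup>+ \<omega>. hawkes_Tgamma \<beta> (\<alpha> * real n) (1 - 1 / real n) (\<lambda>k. E k \<omega>) (\<lambda>k. Z k \<omega>) \<partial>M)
        \<le> (\<integral>\<^sup>+ \<omega>. (SUP m. tm m \<omega>) \<partial>M)"
    proof (rule nn_integral_mono_AE)
      show "AE \<omega> in M. hawkes_Tgamma \<beta> (\<alpha> * real n) (1 - 1 / real n) (\<lambda>k. E k \<omega>) (\<lambda>k. Z k \<omega>) \<le> (SUP m. tm m \<omega>)"
        using AEgood
      proof eventually_elim
        case (elim \<omega>)
        show ?case unfolding tm_def l0_def[symmetric]
          by (rule Tgamma_bound[OF b0 l0]) (use elim in auto)
      qed
    qed
    also have "\<dots> = (SUP m. integral\<^sup>N M (tm m))"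
    proof (rule nn_integral_monotone_convergence_SUP_AE)
      show "AE \<omega> in M. tm m \<omega> \<le> tm (Suc m) \<omega>" for m
        using AEgood
      proof eventually_elim
        case (elim \<omega>)
        show ?case unfolding tm_def
          by (intro ennreal_leI chain_time_mono[OF b0 l0]) (use elim in auto)
      qed
      show "tm m \<in> borel_measurable M" for m
        unfolding tm_def by (rule Wf_chain_meas(2)[where \<phi>=psi]) auto
    qed
    also have "\<dots> \<le> ennreal (\<phi> (l0 / \<beta>))"
      by (rule SUP_least) (simp add: tm_def[abs_def] key)
    also have "\<phi> (l0 / \<beta>) = (ln (real n) + 1 + 0) / \<alpha>"
    proof -
      have "c * (l0 / \<beta>) = real n" using b0 r1 by (simp add: c_def l0_def assms(10) field_simps)
      moreover have "psi (real n) = ln (real n) + 1"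
        using n by (cases "n = 1") (auto simp: psi_def)
      ultimately show ?thesis by (simp add: \<phi>_def \<alpha>'_def assms(10))
    qed
    finally show ?thesis .
  qed
  show ?thesis
  proof (intro exI conjI)
    show "(\<lambda>n::nat. 0::real) \<longlonglongrightarrow> 0" by simp
    show "\<forall>\<^sub>F n in sequentially.
              (\<integral>\<^sup>+ \<omega>. hawkes_Tgamma \<beta> (\<alpha> * real n) (1 - 1 / real n)
                         (\<lambda>k. E k \<omega>) (\<lambda>k. Z k \<omega>) \<partial>M)
              \<le> ennreal ((ln (real n) + 1 + 0) / \<alpha>)"
      using eventually_ge_at_top[of 1] by eventually_elim (rule main)
  qed
qed

end
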